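(* Let $a\in\mathbb C^*$ and $L\in\mathbb Z_{>0}$. Then $\ker(s_{a,L})=\mathfrak I_{U_a(t)^L}$. Moreover $s_{a,L}$ is surjective if and only if $a\neq\pm1$.
   Context: Work over $\mathbb C$. $\mathfrak{sl}_2$ has basis $e,f,h$ with $[e,f]=h$, $[h,e]=2e$, $[h,f]=-2f$. $L(\mathfrak{sl}_2)=\mathbb C[t,t^{-1}]\otimes\mathfrak{sl}_2$ is the loop algebra with bracket $[p(t)x,q(t)y]=p(t)q(t)[x,y]$. The Onsager algebra is the Lie subalgebra $\mathfrak{OA}=\{p(t)e+p(t^{-1})f+q(t)h:\ p,q\in\mathbb C[t,t^{-1}],\ q(t^{-1})=-q(t)\}$ of $L(\mathfrak{sl}_2)$. For $a\in\mathbb C^*$, $U_a(t)=t^2-(a+a^{-1})t+1$ if $a^2\neq1$ and $U_a(t)=t-a$ if $a=\pm1$. For a reciprocal polynomial $P$ (nonconstant monic with $P(t)=\pm t^{\deg P}P(t^{-1})$), $\mathfrak I_{P(t)}=\{p(t)e+p(t^{-1})f+q(t)h\in\mathfrak{OA}:\ p(t),q(t)\in P(t)\mathbb C[t,t^{-1}]\}$. For $a\in\mathbb C^*$, $s_a:\mathfrak{OA}\to\mathfrak{sl}_2[[u]]=\mathbb C[[u]]\otimes\mathfrak{sl}_2$ is the Lie algebra homomorphism given by Taylor expansion at $t=a$ in the variable $u=t-a$: $p(t)x\mapsto\sum_{j\ge0}\frac{p^{(j)}(a)}{j!}u^jx$. $s_{a,L}$ is the composition of $s_a$ with the projection $\mathfrak{sl}_2[[u]]\to\mathfrak{sl}_2[[u]]/u^L\mathfrak{sl}_2[[u]]\cong(\mathbb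 C[u]/u^L\mathbb C[u])\otimes\mathfrak{sl}_2$. *)

theory Defs
  imports "HOL-Computational_Algebra.Computational_Algebra"
begin

text \<open>Laurent polynomials C[t,t^-1] are modelled as formal Laurent series
  with finitely many nonzero coefficients.\<close>

definition laurent_poly :: "complex fls \<Rightarrow> bool" where
  "laurent_poly p \<longleftrightarrow> finite {n. fls_nth p n \<noteq> 0}"

definition lp_eval :: "complex fls \<Rightarrow> complex \<Rightarrow> complex" where
  "lp_eval p z = (\<Sum>n\<in>{n. fls_nth p n \<noteq> 0}. fls_nth p n * z powi n)"

definition lp_inv :: "complex fls \<Rightarrow> complex fls" where
  "lp_inv p = (\<Sum>n\<in>{n. fls_nth p n \<noteq> 0}. fls_const (fls_nth p n) * fls_X_intpow (- n))"

definition poly_to_lp :: "complex poly \<Rightarrow> complex fls" where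
  "poly_to_lp P = fps_to_fls (fps_of_poly P)"

definition lp_multiples :: "complex poly \<Rightarrow> complex fls set" where
  "lp_multiples P = {p. \<exists>q. laurent_poly q \<and> p = poly_to_lp P * q}"

text \<open>Elements of the loop algebra L(sl2) are triples (p, r, q) standing for
  p(t) e + r(t) f + q(t) h.\<close>
type_synonym loop_elt = "complex fls \<times> complex fls \<times> complex fls"

definition onsager :: "loop_elt set" where
  "onsager = {(p, r, q). laurent_poly p \<and> laurent_poly q \<and> r = lp_inv p \<and> lp_inv q = - q}"

definition U_poly :: "complex \<Rightarrow> complex poly" where
  "U_poly a = (if a^2 \<noteq> 1 then [:1, -(a + inverse a), 1:] else [:-a, 1:])"

definition onsager_ideal :: "complex poly \<Rightarrow> loop_elt set" where
  "onsager_ideal P = {(p, r, q) \<in> onsager. p \<in> lp_multiples P \<and> q \<in> lp_multiples P}"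

definition taylor_coeff :: "complex \<Rightarrow> nat \<Rightarrow> complex fls \<Rightarrow> complex" where
  "taylor_coeff a j p = lp_eval ((fls_deriv ^^ j) p) a / fact j"

text \<open>(C[u]/u^L) (x) sl2 is modelled as triples of coefficient sequences
  vanishing from index L on; s_{a,L} truncates the Taylor expansion.\<close>
definition s_trunc :: "complex \<Rightarrow> nat \<Rightarrow> loop_elt \<Rightarrow> (nat \<Rightarrow> complex) \<times> (nat \<Rightarrow> complex) \<times> (nat \<Rightarrow> complex)" where
  "s_trunc a L x = (case x of (p, r, q) \<Rightarrow>
     ((\<lambda>j. if j < L then taylor_coeff a j p else 0),
      (\<lambda>j. if j < L then taylor_coeff a j r else 0),
      (\<lambda>j. if j < L then taylor_coeff a j q else 0)))"

definition trunc_target :: "nat \<Rightarrow> ((nat \<Rightarrow> complex) \<times> (nat \<Rightarrow> complex) \<times> (nat \<Rightarrow> complex)) set" where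
  "trunc_target L = {(c1, c2, c3). \<forall>j\<ge>L. c1 j = 0 \<and> c2 j = 0 \<and> c3 j = 0}"

end

theory Submission
  imports Defs "HOL-Computational_Algebra.Field_as_Ring"
begin

notation fls_nth (infixl "$$" 75)

abbreviation supp :: "complex fls \<Rightarrow> int set" where "supp p \<equiv> {n. fls_nth p n \<noteq> 0}"

lemma lp_eval_superset:
  assumes "finite S" "supp p \<subseteq> S"
  shows "lp_eval p z = (\<Sum>n\<in>S. fls_nth p n * z powi n)"
  unfolding lp_eval_def using assms by (intro sum.mono_neutral_left) auto

lemma monom_nth [simp]: "(fls_const c * fls_X_intpow n) $$ k = (if k = n then (c::complex) else 0)"
  by (subst fls_mult_const_nth(1)) simp

lemma fls_decomp:
  assumes "finite S" "supp p \<subseteq> S"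
  shows "p = (\<Sum>n\<in>S. fls_const (p $$ n) * fls_X_intpow n)"
proof (rule fls_eqI)
  fix k
  have "(\<Sum>n\<in>S. fls_const (p $$ n) * fls_X_intpow n) $$ k = (\<Sum>n\<in>S. if k = n then p $$ n else 0)"
    by (simp only: fls_nth_sum monom_nth)
  also have "\<dots> = p $$ k" using assms by (auto simp: sum.delta)
  finally show "p $$ k = (\<Sum>n\<in>S. fls_const (p $$ n) * fls_X_intpow n) $$ k" by simp
qed

lemma lp_add: "laurent_poly p \<Longrightarrow> laurent_poly q \<Longrightarrow> laurent_poly (p + q)"
  unfolding laurent_poly_def
  by (rule finite_subset[of _ "supp p \<union> supp q"]) auto

lemma lp_uminus: "laurent_poly p \<Longrightarrow> laurent_poly (- p)"
  unfolding laurent_poly_def by simp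

lemma lp_diff: "laurent_poly p \<Longrightarrow> laurent_poly q \<Longrightarrow> laurent_poly (p - q)"
  using lp_add[of p "-q"] lp_uminus[of q] by simp

lemma lp_zero: "laurent_poly 0" unfolding laurent_poly_def by simp

lemma lp_monom: "laurent_poly (fls_const c * fls_X_intpow n)"
  unfolding laurent_poly_def by (rule finite_subset[of _ "{n}"]) auto

lemma lp_sum: "(\<And>i. i \<in> A \<Longrightarrow> laurent_poly (f i)) \<Longrightarrow> laurent_poly (\<Sum>i\<in>A. f i)"
  by (induction A rule: infinite_finite_induct) (auto simp: lp_zero lp_add)

lemma monom_shift: "fls_const c * fls_X_intpow n = fls_shift (-n) (fls_const (c::complex))"
  by (rule fls_eqI) (simp only: monom_nth fls_shift_nth fls_const_nth, simp)

lemma monom_mult: "(fls_const (c::complex) * fls_X_intpow n) * (fls_const d * fls_X_intpow m) = fls_const (c*d) * fls_X_intpow (n+m)"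
  unfolding monom_shift by (simp only: fls_times_both_shifted_simp fls_const_mult_const, simp add: algebra_simps)

lemma prod_decomp:
  assumes "laurent_poly p" "laurent_poly q"
  shows "p * q = (\<Sum>n\<in>supp p. \<Sum>m\<in>supp q. fls_const (p$$n * q$$m) * fls_X_intpow (n+m))"
proof -
  have "p * q = (\<Sum>n\<in>supp p. fls_const (p $$ n) * fls_X_intpow n) * (\<Sum>m\<in>supp q. fls_const (q $$ m) * fls_X_intpow m)"
    using assms fls_decomp[of "supp p" p] fls_decomp[of "supp q" q] unfolding laurent_poly_def by simp
  also have "\<dots> = (\<Sum>n\<in>supp p. \<Sum>m\<in>supp q. fls_const (p$$n * q$$m) * fls_X_intpow (n+m))"
    by (simp add: sum_product monom_mult)
  finally show ?thesis .
qed

lemma lp_mult: "laurent_poly p \<Longrightarrow> laurent_poly q \<Longrightarrow> laurent_poly (p * q)"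
  by (subst prod_decomp) (assumption+, intro lp_sum lp_monom)

lemma lp_const: "laurent_poly (fls_const c)"
  using lp_monom[of c 0] by simp

lemma lp_one: "laurent_poly 1"
  using lp_const[of 1] by simp

lemma lp_X: "laurent_poly fls_X"
  unfolding laurent_poly_def by (rule finite_subset[of _ "{1}"]) auto

lemma lp_Xpow: "laurent_poly (fls_X_intpow n)"
  using lp_monom[of 1 n] by simp

lemma lp_power: "laurent_poly p \<Longrightarrow> laurent_poly (p ^ k)"
  by (induction k) (auto intro: lp_mult lp_one)

lemma lp_deriv: "laurent_poly p \<Longrightarrow> laurent_poly (fls_deriv p)"
  unfolding laurent_poly_def
  by (rule finite_subset[of _ "(\<lambda>n. n - 1) ` supp p"]) (auto simp: image_iff intro!: exI[of _ "_ + 1"])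

lemma lp_derivs: "laurent_poly p \<Longrightarrow> laurent_poly ((fls_deriv ^^ j) p)"
  by (induction j) (auto intro: lp_deriv)

lemma lp_poly: "laurent_poly (poly_to_lp P)"
  unfolding laurent_poly_def poly_to_lp_def
proof (rule finite_subset[of _ "int ` {..degree P}"])
  show "supp (fps_to_fls (fps_of_poly P)) \<subseteq> int ` {..degree P}"
  proof
    fix x assume "x \<in> supp (fps_to_fls (fps_of_poly P))"
    then have "x \<ge> 0" "coeff P (nat x) \<noteq> 0" by (auto split: if_splits)
    then have "nat x \<le> degree P" using le_degree by blast
    then show "x \<in> int ` {..degree P}" using \<open>x \<ge> 0\<close> by (auto intro!: image_eqI[of _ _ "nat x"])
  qed
qed simp


lemma lp_sum_monom: "laurent_poly (\<Sum>i\<in>A. fls_const (c i) * fls_X_intpow (e i))"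
  by (rule lp_sum) (rule lp_monom)

lemma lp_sum_monom2: "laurent_poly (\<Sum>i\<in>A. \<Sum>j\<in>B i. fls_const (c i j) * fls_X_intpow (e i j))"
  by (rule lp_sum) (rule lp_sum_monom)

lemma lp_fin: "laurent_poly p \<Longrightarrow> finite (supp p)"
  unfolding laurent_poly_def .

lemma lp_eval_add:
  assumes "laurent_poly p" "laurent_poly q"
  shows "lp_eval (p + q) z = lp_eval p z + lp_eval q z"
proof -
  let ?S = "supp p \<union> supp q"
  have f: "finite ?S" using assms by (simp add: lp_fin)
  have "lp_eval (p + q) z = (\<Sum>n\<in>?S. (p + q) $$ n * z powi n)"
    by (rule lp_eval_superset[OF f]) auto
  moreover have "lp_eval p z = (\<Sum>n\<in>?S. p $$ n * z powi n)"
    by (rule lp_eval_superset[OF f]) auto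
  moreover have "lp_eval q z = (\<Sum>n\<in>?S. q $$ n * z powi n)"
    by (rule lp_eval_superset[OF f]) auto
  ultimately show ?thesis by (simp add: sum.distrib distrib_right)
qed

lemma lp_eval_uminus: "lp_eval (- p) z = - lp_eval p z"
  unfolding lp_eval_def by (simp add: sum_negf)

lemma lp_eval_diff:
  assumes "laurent_poly p" "laurent_poly q"
  shows "lp_eval (p - q) z = lp_eval p z - lp_eval q z"
  using lp_eval_add[OF assms(1) lp_uminus[OF assms(2)]] by (simp add: lp_eval_uminus)

lemma lp_eval_zero: "lp_eval 0 z = 0"
  unfolding lp_eval_def by simp

lemma lp_eval_sum:
  "(\<And>i. i \<in> A \<Longrightarrow> laurent_poly (f i)) \<Longrightarrow> lp_eval (\<Sum>i\<in>A. f i) z = (\<Sum>i\<in>A. lp_eval (f i) z)"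
proof (induction A rule: infinite_finite_induct)
  case (insert x F)
  then show ?case by (simp add: lp_eval_add lp_sum)
qed (auto simp: lp_eval_zero)

lemma lp_eval_monom: "lp_eval (fls_const c * fls_X_intpow n) z = c * z powi n"
  by (subst lp_eval_superset[of "{n}"]) auto

lemma lp_eval_sum2: "lp_eval (\<Sum>i\<in>A. \<Sum>j\<in>B i. M i j) z = (\<Sum>i\<in>A. \<Sum>j\<in>B i. lp_eval (M i j) z)"
  if "\<And>i j. laurent_poly (M i j)"
proof -
  have "lp_eval (\<Sum>i\<in>A. \<Sum>j\<in>B i. M i j) z = (\<Sum>i\<in>A. lp_eval (\<Sum>j\<in>B i. M i j) z)"
    by (rule lp_eval_sum) (rule lp_sum, rule that)
  also have "\<dots> = (\<Sum>i\<in>A. \<Sum>j\<in>B i. lp_eval (M i j) z)"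
    by (rule sum.cong[OF refl], rule lp_eval_sum, rule that)
  finally show ?thesis .
qed

lemma lp_eval_mult:
  assumes "laurent_poly p" "laurent_poly q" "z \<noteq> 0"
  shows "lp_eval (p * q) z = lp_eval p z * lp_eval q z"
proof -
  have "lp_eval (p * q) z = (\<Sum>n\<in>supp p. \<Sum>m\<in>supp q. lp_eval (fls_const (p$$n * q$$m) * fls_X_intpow (n+m)) z)"
    by (subst prod_decomp[OF assms(1,2)]) (rule lp_eval_sum2, rule lp_monom)
  also have "\<dots> = (\<Sum>n\<in>supp p. \<Sum>m\<in>supp q. (p$$n * z powi n) * (q$$m * z powi m))"
    by (simp only: lp_eval_monom, simp add: power_int_add assms(3) algebra_simps)
  also have "\<dots> = lp_eval p z * lp_eval q z"
    unfolding lp_eval_def by (simp add: sum_product)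
  finally show ?thesis .
qed

lemma lp_eval_const: "lp_eval (fls_const c) z = c"
  using lp_eval_monom[of c 0 z] by simp

lemma lp_eval_one: "lp_eval 1 z = 1"
  using lp_eval_const[of 1 z] by simp

lemma lp_eval_X: "lp_eval fls_X z = z"
  by (subst lp_eval_superset[of "{1}"]) auto

lemma lp_inv_superset:
  assumes "finite S" "supp p \<subseteq> S"
  shows "lp_inv p = (\<Sum>n\<in>S. fls_const (p $$ n) * fls_X_intpow (- n))"
  unfolding lp_inv_def using assms by (intro sum.mono_neutral_left) auto

lemma lp_inv_nth:
  assumes "laurent_poly p"
  shows "lp_inv p $$ k = p $$ (-k)"
proof -
  have "lp_inv p $$ k = (\<Sum>n\<in>supp p. if k = - n then p $$ n else 0)"
    unfolding lp_inv_def by (simp only: fls_nth_sum monom_nth)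
  also have "\<dots> = (\<Sum>n\<in>supp p. if n = - k then p $$ n else 0)"
    by (rule sum.cong) auto
  also have "\<dots> = p $$ (-k)" using assms by (auto simp: sum.delta lp_fin)
  finally show ?thesis .
qed

lemma lp_inv_lp: "laurent_poly p \<Longrightarrow> laurent_poly (lp_inv p)"
  unfolding laurent_poly_def lp_inv_def
  using lp_sum[of "supp p" "\<lambda>n. fls_const (p $$ n) * fls_X_intpow (- n)"] lp_monom
  unfolding laurent_poly_def by blast

lemma lp_inv_inv: "laurent_poly p \<Longrightarrow> lp_inv (lp_inv p) = p"
  by (rule fls_eqI) (simp add: lp_inv_nth lp_inv_lp)

lemma lp_inv_add: "laurent_poly p \<Longrightarrow> laurent_poly q \<Longrightarrow> lp_inv (p + q) = lp_inv p + lp_inv q"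
  by (rule fls_eqI) (simp add: lp_inv_nth lp_add)

lemma lp_inv_uminus: "laurent_poly p \<Longrightarrow> lp_inv (- p) = - lp_inv p"
  by (rule fls_eqI) (simp add: lp_inv_nth lp_uminus)

lemma lp_inv_diff: "laurent_poly p \<Longrightarrow> laurent_poly q \<Longrightarrow> lp_inv (p - q) = lp_inv p - lp_inv q"
  by (rule fls_eqI) (simp add: lp_inv_nth lp_diff)

lemma lp_inv_zero: "lp_inv 0 = 0"
  by (rule fls_eqI) (simp add: lp_inv_nth lp_zero)

lemma lp_inv_monom: "lp_inv (fls_const c * fls_X_intpow n) = fls_const c * fls_X_intpow (-n)"
  by (rule fls_eqI) (simp only: lp_inv_nth[OF lp_monom] monom_nth, auto)

lemma lp_inv_sum:
  "(\<And>i. i \<in> A \<Longrightarrow> laurent_poly (f i)) \<Longrightarrow> lp_inv (\<Sum>i\<in>A. f i) = (\<Sum>i\<in>A. lp_inv (f i))"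
proof (induction A rule: infinite_finite_induct)
  case (insert x F)
  then show ?case by (simp add: lp_inv_add lp_sum)
qed (auto simp: lp_inv_zero)

lemma lp_inv_sum2: "lp_inv (\<Sum>i\<in>A. \<Sum>j\<in>B i. M i j) = (\<Sum>i\<in>A. \<Sum>j\<in>B i. lp_inv (M i j))"
  if "\<And>i j. laurent_poly (M i j)"
proof -
  have "lp_inv (\<Sum>i\<in>A. \<Sum>j\<in>B i. M i j) = (\<Sum>i\<in>A. lp_inv (\<Sum>j\<in>B i. M i j))"
    by (rule lp_inv_sum) (rule lp_sum, rule that)
  also have "\<dots> = (\<Sum>i\<in>A. \<Sum>j\<in>B i. lp_inv (M i j))"
    by (rule sum.cong[OF refl], rule lp_inv_sum, rule that)
  finally show ?thesis .
qed

lemma lp_inv_mult: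
  assumes "laurent_poly p" "laurent_poly q"
  shows "lp_inv (p * q) = lp_inv p * lp_inv q"
proof -
  have "lp_inv (p * q) = (\<Sum>n\<in>supp p. \<Sum>m\<in>supp q. lp_inv (fls_const (p$$n * q$$m) * fls_X_intpow (n+m)))"
    by (subst prod_decomp[OF assms(1,2)]) (rule lp_inv_sum2, rule lp_monom)
  also have "\<dots> = (\<Sum>n\<in>supp p. \<Sum>m\<in>supp q. (fls_const (p$$n) * fls_X_intpow (-n)) * (fls_const (q$$m) * fls_X_intpow (-m)))"
    by (simp only: lp_inv_monom monom_mult, simp add: algebra_simps)
  also have "\<dots> = lp_inv p * lp_inv q"
    unfolding lp_inv_def by (simp add: sum_product)
  finally show ?thesis .
qed

lemma lp_inv_const: "lp_inv (fls_const c) = fls_const c"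
  using lp_inv_monom[of c 0] by simp

lemma lp_inv_one: "lp_inv 1 = 1"
  using lp_inv_const[of 1] by simp

lemma lp_inv_X: "lp_inv fls_X = fls_X_intpow (-1)"
proof -
  have "(fls_X::complex fls) = fls_const 1 * fls_X_intpow (1::int)"
    by (rule fls_eqI) (simp only: monom_nth, simp)
  then show ?thesis using lp_inv_monom[of 1 1] by simp
qed

lemma lp_inv_power: "laurent_poly p \<Longrightarrow> lp_inv (p ^ k) = lp_inv p ^ k"
  by (induction k) (auto simp: lp_inv_one lp_inv_mult lp_power)

lemma lp_eval_inv:
  assumes "laurent_poly p"
  shows "lp_eval (lp_inv p) z = lp_eval p (inverse z)"
proof -
  let ?S = "supp p \<union> uminus ` supp p"
  have f: "finite ?S" using assms by (simp add: lp_fin)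
  have "lp_eval (lp_inv p) z = (\<Sum>n\<in>?S. lp_inv p $$ n * z powi n)"
  proof (rule lp_eval_superset[OF f])
    show "supp (lp_inv p) \<subseteq> ?S"
    proof
      fix x assume "x \<in> supp (lp_inv p)"
      then have "p $$ (-x) \<noteq> 0" by (simp add: lp_inv_nth assms)
      then have "x \<in> uminus ` supp p" by (intro image_eqI[of _ _ "-x"]) auto
      then show "x \<in> ?S" by blast
    qed
  qed
  also have "\<dots> = (\<Sum>n\<in>?S. p $$ (-n) * z powi n)"
    by (simp add: lp_inv_nth assms)
  also have "\<dots> = (\<Sum>n\<in>uminus ` ?S. p $$ n * z powi (-n))"
    by (subst sum.reindex) (auto simp: inj_on_def)
  also have "uminus ` ?S = ?S"
  proof
    show "?S \<subseteq> uminus ` ?S"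
    proof
      fix x assume "x \<in> ?S"
      then show "x \<in> uminus ` ?S" by (intro image_eqI[of _ _ "-x"]) auto
    qed
  qed auto
  also have "(\<Sum>n\<in>?S. p $$ n * z powi (-n)) = (\<Sum>n\<in>?S. p $$ n * inverse z powi n)"
    by (simp add: power_int_minus power_int_inverse)
  also have "\<dots> = lp_eval p (inverse z)"
    by (rule lp_eval_superset[OF f, symmetric]) auto
  finally show ?thesis .
qed


definition lin :: "complex \<Rightarrow> complex fls" where "lin a = fls_X - fls_const a"

lemma lp_lin: "laurent_poly (lin a)"
  unfolding lin_def by (intro lp_diff lp_X lp_const)

lemma lp_eval_lin: "lp_eval (lin a) z = z - a"
  unfolding lin_def by (simp add: lp_eval_diff lp_X lp_const lp_eval_X lp_eval_const)

lemma deriv_lin [simp]: "fls_deriv (lin a) = 1"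
  unfolding lin_def by simp

lemma derivs_lin:
  "(fls_deriv ^^ Suc j) (lin a * q) = lin a * (fls_deriv ^^ Suc j) q + of_nat (Suc j) * (fls_deriv ^^ j) q"
proof (induction j)
  case 0
  then show ?case by simp
next
  case (Suc j)
  have "(fls_deriv ^^ Suc (Suc j)) (lin a * q) = fls_deriv ((fls_deriv ^^ Suc j) (lin a * q))"
    by simp
  also have "\<dots> = fls_deriv (lin a * (fls_deriv ^^ Suc j) q + of_nat (Suc j) * (fls_deriv ^^ j) q)"
    using Suc by simp
  also have "\<dots> = lin a * (fls_deriv ^^ Suc (Suc j)) q + of_nat (Suc (Suc j)) * (fls_deriv ^^ Suc j) q"
    by (simp add: algebra_simps)
  finally show ?case .
qed

lemma lp_of_nat: "laurent_poly (of_nat n)"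
  by (simp add: fls_of_nat lp_const)

lemma lp_eval_of_nat: "lp_eval (of_nat n) z = of_nat n"
  by (simp add: fls_of_nat lp_eval_const)

lemma tc_lin_Suc:
  assumes "laurent_poly q" "a \<noteq> 0"
  shows "taylor_coeff a (Suc j) (lin a * q) = taylor_coeff a j q"
proof -
  have l1: "laurent_poly ((fls_deriv ^^ Suc j) q)" "laurent_poly ((fls_deriv ^^ j) q)"
    using assms lp_derivs by blast+
  have "lp_eval ((fls_deriv ^^ Suc j) (lin a * q)) a = of_nat (Suc j) * lp_eval ((fls_deriv ^^ j) q) a"
    unfolding derivs_lin
    by (simp only: lp_eval_add[OF lp_mult[OF lp_lin l1(1)] lp_mult[OF lp_of_nat l1(2)]]
        lp_eval_mult[OF lp_lin l1(1) assms(2)] lp_eval_mult[OF lp_of_nat l1(2) assms(2)] lp_eval_lin lp_eval_of_nat, simp)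
  moreover have "(fact (Suc j) :: complex) = of_nat (Suc j) * fact j"
    by (simp only: fact_Suc of_nat_mult)
  moreover have "(of_nat (Suc j) :: complex) \<noteq> 0" by (simp only: of_nat_eq_0_iff)
  ultimately show ?thesis
    unfolding taylor_coeff_def by (metis mult_divide_mult_cancel_left)
qed

lemma tc_0: "taylor_coeff a 0 p = lp_eval p a"
  unfolding taylor_coeff_def by simp

lemma Xpow_nat: "fls_X_intpow (int k) = (fls_X ^ k :: complex fls)"
  by (simp add: fls_X_power_conv_shift_1)

lemma factor_monom_nat:
  "\<exists>g. laurent_poly g \<and> fls_X_intpow (int k) - fls_const (a ^ k) = lin a * g"
proof -
  have "fls_X_intpow (int k) - fls_const (a ^ k) = fls_X ^ k - fls_const a ^ k"
    by (simp add: Xpow_nat fls_const_power)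
  also have "\<dots> = lin a * (\<Sum>i<k. fls_const a ^ (k - Suc i) * fls_X ^ i)"
    unfolding lin_def by (rule power_diff_sumr2)
  finally show ?thesis
    by (intro exI[of _ "\<Sum>i<k. fls_const a ^ (k - Suc i) * fls_X ^ i"] conjI lp_sum lp_mult lp_power lp_const lp_X)
qed

lemma ring_aux: "u * x = 1 \<Longrightarrow> w * c = 1 \<Longrightarrow> u - w = - (u * w) * (x - c :: 'a :: comm_ring_1)"
proof -
  assume h: "u * x = 1" "w * c = 1"
  have "- (u * w) * (x - c) = u * (w * c) - w * (u * x)" by (simp add: algebra_simps)
  then show ?thesis using h by simp
qed

lemma factor_monom:
  assumes "a \<noteq> 0"
  shows "\<exists>g. laurent_poly g \<and> fls_X_intpow n - fls_const (a powi n) = lin a * g"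
proof (cases "n \<ge> 0")
  case True
  then obtain k where "n = int k" by (metis nonneg_int_cases)
  then show ?thesis using factor_monom_nat[of k a] by simp
next
  case False
  then obtain k where n: "n = - int k" by (metis int_cases2 linorder_not_le neg_int_cases) 
  obtain g where g: "laurent_poly g" "fls_X_intpow (int k) - fls_const (a ^ k) = lin a * g"
    using factor_monom_nat[of k a] by blast
  have inv1: "fls_X_intpow (- int k) * fls_X_intpow (int k) = (1 :: complex fls)"
    by (simp add: fls_times_both_shifted_simp)
  have inv2: "fls_const (a powi (- int k)) * fls_const (a ^ k) = 1"
    using assms by (simp add: power_int_minus)
  have "fls_X_intpow n - fls_const (a powi n)
        = - (fls_X_intpow (- int k) * fls_const (a powi (- int k))) * (fls_X_intpow (int k) - fls_const (a ^ k))"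
    unfolding n by (rule ring_aux[OF inv1 inv2])
  also have "\<dots> = lin a * (- (fls_X_intpow (- int k) * fls_const (a powi (- int k))) * g)"
    unfolding g by (simp add: algebra_simps)
  finally show ?thesis
    by (intro exI[of _ "- (fls_X_intpow (- int k) * fls_const (a powi (- int k))) * g"] conjI lp_mult lp_uminus lp_Xpow lp_const g)
qed


lemma factor_thm:
  assumes "laurent_poly p" "a \<noteq> 0" "lp_eval p a = 0"
  shows "\<exists>q. laurent_poly q \<and> p = lin a * q"
proof -
  have "\<forall>n. \<exists>g. laurent_poly g \<and> fls_X_intpow n - fls_const (a powi n) = lin a * g"
    using factor_monom[OF assms(2)] by blast
  then obtain G where G: "\<And>n. laurent_poly (G n)" "\<And>n. fls_X_intpow n - fls_const (a powi n) = lin a * G n"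
    by metis
  let ?S = "supp p"
  have f: "finite ?S" using assms(1) by (simp add: lp_fin)
  have z: "(\<Sum>n\<in>?S. fls_const (p $$ n) * fls_const (a powi n)) = 0"
  proof (rule fls_eqI)
    fix k
    have "(\<Sum>n\<in>?S. fls_const (p $$ n) * fls_const (a powi n)) $$ k = (\<Sum>n\<in>?S. if k = 0 then p $$ n * a powi n else 0)"
      by (simp add: fls_nth_sum)
    also have "\<dots> = (if k = 0 then lp_eval p a else 0)"
      unfolding lp_eval_def by simp
    finally show "(\<Sum>n\<in>?S. fls_const (p $$ n) * fls_const (a powi n)) $$ k = 0 $$ k"
      using assms(3) by simp
  qed
  have "p = (\<Sum>n\<in>?S. fls_const (p $$ n) * fls_X_intpow n) - (\<Sum>n\<in>?S. fls_const (p $$ n) * fls_const (a powi n))"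
    using fls_decomp[OF f, of p] z by simp
  also have "\<dots> = (\<Sum>n\<in>?S. fls_const (p $$ n) * (fls_X_intpow n - fls_const (a powi n)))"
    by (simp add: sum_subtractf right_diff_distrib)
  also have "\<dots> = (\<Sum>n\<in>?S. fls_const (p $$ n) * (lin a * G n))"
    by (simp only: G(2))
  also have "\<dots> = lin a * (\<Sum>n\<in>?S. fls_const (p $$ n) * G n)"
    by (simp add: sum_distrib_left mult.left_commute)
  finally show ?thesis
    by (intro exI[of _ "\<Sum>n\<in>?S. fls_const (p $$ n) * G n"] conjI lp_sum lp_mult lp_const G(1))
qed

lemma lemmaA:
  assumes "a \<noteq> 0" "laurent_poly p"
  shows "(\<forall>j<L. taylor_coeff a j p = 0) \<longleftrightarrow> (\<exists>q. laurent_poly q \<and> p = lin a ^ L * q)"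
  using assms(2)
proof (induction L arbitrary: p)
  case 0
  then show ?case by auto
next
  case (Suc L)
  show ?case
  proof
    assume h: "\<forall>j<Suc L. taylor_coeff a j p = 0"
    then have "lp_eval p a = 0" using tc_0[of a p] by auto
    then obtain q1 where q1: "laurent_poly q1" "p = lin a * q1"
      using factor_thm[OF Suc.prems assms(1)] by blast
    have "\<forall>j<L. taylor_coeff a j q1 = 0"
      using h tc_lin_Suc[OF q1(1) assms(1)] unfolding q1(2) by auto
    then obtain q where "laurent_poly q" "q1 = lin a ^ L * q"
      using Suc.IH[OF q1(1)] by blast
    then show "\<exists>q. laurent_poly q \<and> p = lin a ^ Suc L * q"
      using q1 by (auto simp: mult.assoc)
  next
    assume "\<exists>q. laurent_poly q \<and> p = lin a ^ Suc L * q"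
    then obtain q where q: "laurent_poly q" "p = lin a * (lin a ^ L * q)"
      by (auto simp: mult.assoc)
    have lq: "laurent_poly (lin a ^ L * q)" by (intro lp_mult lp_power lp_lin q(1))
    have ih: "\<forall>j<L. taylor_coeff a j (lin a ^ L * q) = 0"
      using Suc.IH[OF lq] q(1) by blast
    show "\<forall>j<Suc L. taylor_coeff a j p = 0"
    proof (intro allI impI)
      fix j assume "j < Suc L"
      then show "taylor_coeff a j p = 0"
      proof (cases j)
        case 0
        then show ?thesis unfolding q(2)
          by (simp add: tc_0 lp_eval_mult[OF lp_lin lq assms(1)] lp_eval_lin)
      next
        case (Suc i)
        then show ?thesis using ih \<open>j < Suc L\<close> unfolding q(2) by (simp add: tc_lin_Suc[OF lq assms(1)])
      qed
    qed
  qed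
qed

lemma derivs_add: "(fls_deriv ^^ j) (f + g) = (fls_deriv ^^ j) f + (fls_deriv ^^ j) g"
  by (induction j) auto

lemma derivs_uminus: "(fls_deriv ^^ j) (- f) = - (fls_deriv ^^ j) f"
  by (induction j) auto

lemma derivs_diff: "(fls_deriv ^^ j) (f - g) = (fls_deriv ^^ j) f - (fls_deriv ^^ j) g"
  by (induction j) auto

lemma tc_add: "laurent_poly f \<Longrightarrow> laurent_poly g \<Longrightarrow> taylor_coeff a j (f + g) = taylor_coeff a j f + taylor_coeff a j g"
  unfolding taylor_coeff_def derivs_add by (simp add: lp_eval_add lp_derivs add_divide_distrib)

lemma tc_uminus: "taylor_coeff a j (- f) = - taylor_coeff a j f"
  unfolding taylor_coeff_def derivs_uminus by (simp add: lp_eval_uminus)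

lemma tc_diff: "laurent_poly f \<Longrightarrow> laurent_poly g \<Longrightarrow> taylor_coeff a j (f - g) = taylor_coeff a j f - taylor_coeff a j g"
  unfolding taylor_coeff_def derivs_diff by (simp add: lp_eval_diff lp_derivs diff_divide_distrib)

lemma derivs_const_Suc: "(fls_deriv ^^ Suc j) (fls_const c) = 0"
  by (induction j) auto

lemma tc_const: "taylor_coeff a j (fls_const c) = (if j = 0 then c else 0)"
proof (cases j)
  case 0 then show ?thesis by (simp add: tc_0 lp_eval_const)
next
  case (Suc i) then show ?thesis unfolding taylor_coeff_def by (simp only: derivs_const_Suc lp_eval_zero) simp
qed

lemma tc_exists:
  assumes "a \<noteq> 0"
  shows "\<exists>f. laurent_poly f \<and> (\<forall>j<L. taylor_coeff a j f = c j)"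
proof (induction L arbitrary: c)
  case 0
  then show ?case using lp_zero by blast
next
  case (Suc L)
  obtain f' where f': "laurent_poly f'" "\<forall>j<L. taylor_coeff a j f' = c (Suc j)"
    using Suc.IH[of "\<lambda>j. c (Suc j)"] by blast
  have lf: "laurent_poly (lin a * f')" by (intro lp_mult lp_lin f'(1))
  have "\<forall>j<Suc L. taylor_coeff a j (fls_const (c 0) + lin a * f') = c j"
  proof (intro allI impI)
    fix j assume "j < Suc L"
    then show "taylor_coeff a j (fls_const (c 0) + lin a * f') = c j"
      using f'(2)
      by (cases j) (auto simp: tc_add[OF lp_const lf] tc_const tc_0 lp_eval_mult[OF lp_lin f'(1) assms] lp_eval_lin tc_lin_Suc[OF f'(1) assms])
  qed
  then show ?case by (intro exI[of _ "fls_const (c 0) + lin a * f'"] conjI lp_add lp_const lf)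
qed

lemma poly_bezout:
  fixes a b :: complex
  assumes "a \<noteq> b"
  shows "\<exists>u v. u * [:-a,1:]^L + v * [:-b,1:]^L = 1"
proof -
  have "coprime [:-a,1:] [:-b,1:]"
  proof (rule coprimeI)
    fix c assume "c dvd [:-a,1:]" "c dvd [:-b,1:]"
    then have "c dvd [:-a,1:] - [:-b,1:]" by (rule dvd_diff)
    moreover have "[:-a,1:] - [:-b,1:] = [:b - a:]" by simp
    moreover have "is_unit [:b - a:]" using assms by (simp add: is_unit_const_poly_iff dvd_field_iff)
    ultimately show "is_unit c" using dvd_unit_imp_unit by metis
  qed
  then have c: "coprime ([:-a,1:]^L) ([:-b,1:]^L)" by (simp only: coprime_power_left_iff coprime_power_right_iff simp_thms)
  have "gcd ([:-a,1:]^L) ([:-b,1:]^L) = 1" by (rule coprime_imp_gcd_eq_1[OF c])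
  then have "fst (bezout_coefficients ([:-a,1:]^L) ([:-b,1:]^L)) * [:-a,1:]^L + snd (bezout_coefficients ([:-a,1:]^L) ([:-b,1:]^L)) * [:-b,1:]^L = 1"
    using bezout_coefficients_fst_snd[of "[:-a,1:]^L" "[:-b,1:]^L"] by simp
  then show ?thesis by blast
qed

lemma poly_to_lp_mult: "poly_to_lp (P * Q) = poly_to_lp P * poly_to_lp Q"
  unfolding poly_to_lp_def by (simp add: fps_of_poly_mult fls_times_fps_to_fls)

lemma poly_to_lp_add: "poly_to_lp (P + Q) = poly_to_lp P + poly_to_lp Q"
  unfolding poly_to_lp_def by (simp add: fps_of_poly_add)

lemma poly_to_lp_one: "poly_to_lp 1 = 1"
  unfolding poly_to_lp_def by simp

lemma poly_to_lp_power: "poly_to_lp (P ^ n) = poly_to_lp P ^ n"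
  by (induction n) (simp_all add: poly_to_lp_one poly_to_lp_mult)

lemma poly_to_lp_lin: "poly_to_lp [:-a,1:] = lin a"
  unfolding poly_to_lp_def lin_def by (simp add: fps_of_poly_pCons)

definition Mset :: "complex \<Rightarrow> nat \<Rightarrow> complex fls set" where
  "Mset a L = {p. \<exists>q. laurent_poly q \<and> p = lin a ^ L * q}"

lemma lp_multiples_lin: "lp_multiples ([:-a,1:]^L) = Mset a L"
  unfolding lp_multiples_def Mset_def by (simp add: poly_to_lp_power poly_to_lp_lin)

lemma lp_bezout:
  assumes "a \<noteq> b"
  shows "\<exists>u v. laurent_poly u \<and> laurent_poly v \<and> u * lin a ^ L + v * lin b ^ L = 1"
proof -
  obtain U V where "U * [:-a,1:]^L + V * [:-b,1:]^L = 1" using poly_bezout[OF assms] by blast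
  then have "poly_to_lp (U * [:-a,1:]^L + V * [:-b,1:]^L) = 1" by (simp add: poly_to_lp_one)
  then have "poly_to_lp U * lin a ^ L + poly_to_lp V * lin b ^ L = 1"
    by (simp add: poly_to_lp_add poly_to_lp_mult poly_to_lp_power poly_to_lp_lin)
  then show ?thesis using lp_poly by blast
qed

lemma ring_aux2: "u * x = 1 \<Longrightarrow> e * d = -1 \<Longrightarrow> (e * u) * (x - d) = e + (u :: 'a :: comm_ring_1)"
proof -
  assume h: "u * x = 1" "e * d = -1"
  have "(e * u) * (x - d) = e * (u * x) - (e * d) * u" by (simp add: algebra_simps)
  then show ?thesis using h by simp
qed

lemma lp_inv_lin:
  assumes "a \<noteq> 0"
  shows "lp_inv (lin a) = (fls_const (-a) * fls_X_intpow (-1)) * lin (inverse a)"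
proof -
  have u0: "fls_X_intpow (- int 1) * fls_X_intpow (int 1) = (1::complex fls)"
    by (simp only: fls_times_both_shifted_simp) simp
  have u: "fls_X_intpow (-1) * fls_X = (1::complex fls)"
    using u0 unfolding Xpow_nat by simp
  have e: "fls_const (-a) * fls_const (inverse a) = -1"
    using assms by simp
  have "lp_inv (lin a) = fls_X_intpow (-1) - fls_const a"
    unfolding lin_def by (simp add: lp_inv_diff lp_X lp_const lp_inv_X lp_inv_const)
  also have "\<dots> = fls_const (-a) + fls_X_intpow (-1)" by simp
  also have "\<dots> = (fls_const (-a) * fls_X_intpow (-1)) * lin (inverse a)"
    unfolding lin_def by (rule ring_aux2[OF u e, symmetric])
  finally show ?thesis .
qed

lemma pow_aux: "(w * l) ^ n * s = l ^ n * (w ^ n * s :: 'a::comm_semiring_1)"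
  by (simp add: power_mult_distrib ac_simps)

lemma INV_fwd:
  assumes "a \<noteq> 0" "laurent_poly f" "lp_inv f \<in> Mset a L"
  shows "f \<in> Mset (inverse a) L"
proof -
  obtain s where s: "laurent_poly s" "lp_inv f = lin a ^ L * s" using assms(3) unfolding Mset_def by blast
  let ?w = "fls_const (-a) * fls_X_intpow (-1)"
  have "f = lp_inv (lp_inv f)" using lp_inv_inv[OF assms(2)] by simp
  also have "\<dots> = lp_inv (lin a) ^ L * lp_inv s"
    unfolding s(2) by (simp add: lp_inv_mult lp_inv_power lp_power lp_lin s(1))
  also have "\<dots> = lin (inverse a) ^ L * (?w ^ L * lp_inv s)"
    unfolding lp_inv_lin[OF assms(1)] by (rule pow_aux)
  finally show ?thesis unfolding Mset_def
    by (intro CollectI exI[of _ "?w ^ L * lp_inv s"] conjI lp_mult lp_power lp_const lp_Xpow lp_inv_lp s(1))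
qed

lemma INV:
  assumes "a \<noteq> 0" "laurent_poly f"
  shows "lp_inv f \<in> Mset a L \<longleftrightarrow> f \<in> Mset (inverse a) L"
proof
  assume "f \<in> Mset (inverse a) L"
  then have "lp_inv (lp_inv f) \<in> Mset (inverse a) L" using lp_inv_inv[OF assms(2)] by simp
  then show "lp_inv f \<in> Mset a L"
    using INV_fwd[of "inverse a" "lp_inv f" L] assms lp_inv_lp by simp
qed (rule INV_fwd[OF assms])

lemma U_split:
  assumes "a\<^sup>2 \<noteq> 1" "a \<noteq> 0"
  shows "U_poly a = [:-a,1:] * [:-inverse a,1:]"
proof -
  have "[:-a,1:] * [:-inverse a,1:] = [:a * inverse a, -(a + inverse a), 1:]" by simp
  moreover have "a * inverse a = 1" using assms(2) by simp
  ultimately show ?thesis using assms(1) unfolding U_poly_def by simp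
qed

lemma keyK:
  assumes "a \<noteq> 0" "laurent_poly f"
  shows "(f \<in> Mset a L \<and> f \<in> Mset (inverse a) L) \<longleftrightarrow> f \<in> lp_multiples (U_poly a ^ L)"
proof (cases "a\<^sup>2 = 1")
  case True
  then have "inverse a = a" by (intro inverse_unique) (simp add: power2_eq_square)
  moreover have "U_poly a = [:-a,1:]" using True unfolding U_poly_def by simp
  ultimately show ?thesis by (simp add: lp_multiples_lin)
next
  case False
  let ?b = "inverse a"
  have ab: "a \<noteq> ?b"
  proof
    assume h: "a = ?b"
    have "a * a = a * ?b" using h by (rule arg_cong[where f="\<lambda>x. a * x"])
    then have "a\<^sup>2 = 1" using assms(1) by (simp add: power2_eq_square)
    then show False using False by simp
  qed
  have U: "poly_to_lp (U_poly a ^ L) = lin a ^ L * lin ?b ^ L"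
    unfolding U_split[OF False assms(1)] by (simp only: poly_to_lp_power poly_to_lp_mult poly_to_lp_lin power_mult_distrib)
  show ?thesis
  proof
    assume "f \<in> Mset a L \<and> f \<in> Mset ?b L"
    then obtain s t where st: "laurent_poly s" "f = lin a ^ L * s" "laurent_poly t" "f = lin ?b ^ L * t"
      unfolding Mset_def by blast
    obtain u v where uv: "laurent_poly u" "laurent_poly v" "u * lin a ^ L + v * lin ?b ^ L = 1"
      using lp_bezout[OF ab] by blast
    have "f = f * (u * lin a ^ L + v * lin ?b ^ L)" using uv(3) by simp
    also have "\<dots> = (lin ?b ^ L * t) * u * lin a ^ L + (lin a ^ L * s) * v * lin ?b ^ L"
      using st by (simp add: algebra_simps)
    also have "\<dots> = poly_to_lp (U_poly a ^ L) * (t * u + s * v)"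
      unfolding U by (simp add: algebra_simps)
    finally show "f \<in> lp_multiples (U_poly a ^ L)"
      unfolding lp_multiples_def
      by (intro CollectI exI[of _ "t * u + s * v"] conjI lp_add lp_mult st uv)
  next
    assume "f \<in> lp_multiples (U_poly a ^ L)"
    then obtain s where s: "laurent_poly s" "f = lin a ^ L * lin ?b ^ L * s"
      unfolding lp_multiples_def U by blast
    have e1: "f = lin a ^ L * (lin ?b ^ L * s)" using s(2) by (simp only: mult.assoc)
    have e2: "f = lin ?b ^ L * (lin a ^ L * s)" using s(2)
      by (simp only: mult.commute[of "lin a ^ L" "lin ?b ^ L"] mult.assoc)
    show "f \<in> Mset a L \<and> f \<in> Mset ?b L"
      unfolding Mset_def
      by (intro conjI CollectI exI[of _ "lin ?b ^ L * s"] exI[of _ "lin a ^ L * s"] lp_mult lp_power lp_lin s(1) e1 e2)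
  qed
qed

lemma Mset_add: "f \<in> Mset a L \<Longrightarrow> g \<in> Mset a L \<Longrightarrow> f + g \<in> Mset a L"
  unfolding Mset_def by (auto intro!: lp_add simp: distrib_left)

lemma Mset_uminus: "f \<in> Mset a L \<Longrightarrow> - f \<in> Mset a L"
  unfolding Mset_def by (auto intro!: lp_uminus)

lemma Mset_uminus_iff: "- f \<in> Mset a L \<longleftrightarrow> f \<in> Mset a L"
  using Mset_uminus[of f a L] Mset_uminus[of "-f" a L] by auto

lemma Mset_diff: "f \<in> Mset a L \<Longrightarrow> g \<in> Mset a L \<Longrightarrow> f - g \<in> Mset a L"
  using Mset_add[of f a L "-g"] Mset_uminus[of g a L] by simp

lemma MsetI: "laurent_poly s \<Longrightarrow> f = lin a ^ L * s \<Longrightarrow> f \<in> Mset a L"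
  unfolding Mset_def by blast

lemma V_iff:
  assumes "a \<noteq> 0" "laurent_poly p"
  shows "(\<forall>j<L. taylor_coeff a j p = 0) \<longleftrightarrow> p \<in> Mset a L"
  using lemmaA[OF assms] unfolding Mset_def by simp

lemma tc_eq:
  assumes "a \<noteq> 0" "laurent_poly f" "laurent_poly g" "f - g \<in> Mset a L" "j < L"
  shows "taylor_coeff a j f = taylor_coeff a j g"
proof -
  have "taylor_coeff a j (f - g) = 0" using V_iff[OF assms(1) lp_diff[OF assms(2,3)]] assms(4,5) by blast
  then show ?thesis using tc_diff[OF assms(2,3)] by simp
qed

lemma trunc_zero: "((\<lambda>j. if j < L then g j else 0) = (\<lambda>_. (0::complex))) \<longleftrightarrow> (\<forall>j<L. g j = 0)"
  by (auto simp: fun_eq_iff)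

lemma kernel_char:
  assumes "a \<noteq> 0" "(p, r, q) \<in> onsager"
  shows "s_trunc a L (p, r, q) = ((\<lambda>_. 0), (\<lambda>_. 0), (\<lambda>_. 0)) \<longleftrightarrow>
         p \<in> lp_multiples (U_poly a ^ L) \<and> q \<in> lp_multiples (U_poly a ^ L)"
proof -
  have o: "laurent_poly p" "laurent_poly q" "r = lp_inv p" "lp_inv q = - q"
    using assms(2) unfolding onsager_def by auto
  have "s_trunc a L (p, r, q) = ((\<lambda>_. 0), (\<lambda>_. 0), (\<lambda>_. 0)) \<longleftrightarrow>
        (\<forall>j<L. taylor_coeff a j p = 0) \<and> (\<forall>j<L. taylor_coeff a j r = 0) \<and> (\<forall>j<L. taylor_coeff a j q = 0)"
    unfolding s_trunc_def by (simp only: prod.case prod.inject trunc_zero)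
  also have "\<dots> \<longleftrightarrow> p \<in> Mset a L \<and> lp_inv p \<in> Mset a L \<and> q \<in> Mset a L"
    using V_iff[OF assms(1) o(1)] V_iff[OF assms(1) lp_inv_lp[OF o(1)]] V_iff[OF assms(1) o(2)] o(3) by simp
  also have "\<dots> \<longleftrightarrow> (p \<in> Mset a L \<and> p \<in> Mset (inverse a) L) \<and> (q \<in> Mset a L \<and> q \<in> Mset (inverse a) L)"
    using INV[OF assms(1) o(1), of L] INV[OF assms(1) o(2), of L] o(4) Mset_uminus_iff[of q a L] by auto
  also have "\<dots> \<longleftrightarrow> p \<in> lp_multiples (U_poly a ^ L) \<and> q \<in> lp_multiples (U_poly a ^ L)"
    using keyK[OF assms(1) o(1)] keyK[OF assms(1) o(2)] by simp
  finally show ?thesis .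
qed

lemma kernel_part:
  assumes "a \<noteq> 0"
  shows "{x \<in> onsager. s_trunc a L x = ((\<lambda>_. 0), (\<lambda>_. 0), (\<lambda>_. 0))} = onsager_ideal (U_poly a ^ L)"
proof (rule set_eqI)
  fix x :: loop_elt
  obtain p r q where x: "x = (p, r, q)" by (cases x) auto
  show "x \<in> {x \<in> onsager. s_trunc a L x = ((\<lambda>_. 0), (\<lambda>_. 0), (\<lambda>_. 0))} \<longleftrightarrow> x \<in> onsager_ideal (U_poly a ^ L)"
    unfolding x onsager_ideal_def using kernel_char[OF assms, of p r q L] by auto
qed

lemma not_surj:
  assumes "a \<noteq> 0" "L > 0" "a\<^sup>2 = 1"
  shows "s_trunc a L ` onsager \<noteq> trunc_target L"
proof
  assume h: "s_trunc a L ` onsager = trunc_target L"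
  let ?t = "((\<lambda>_. 0), (\<lambda>_. 0), (\<lambda>j. if j = 0 then 1 else 0)) :: (nat \<Rightarrow> complex) \<times> (nat \<Rightarrow> complex) \<times> (nat \<Rightarrow> complex)"
  have tt: "?t \<in> trunc_target L" unfolding trunc_target_def using assms(2) by auto
  have "?t \<in> s_trunc a L ` onsager" using tt h by simp
  then obtain x where x0: "?t = s_trunc a L x" "x \<in> onsager" by (rule imageE)
  then have x: "x \<in> onsager" "s_trunc a L x = ?t" by simp_all
  obtain p r q where pq: "x = (p, r, q)" by (cases x) auto
  have o: "laurent_poly q" "lp_inv q = - q" using x(1) unfolding pq onsager_def by auto
  have "(\<lambda>j. if j < L then taylor_coeff a j q else 0) = (\<lambda>j. if j = 0 then 1 else 0)"
    using x(2) unfolding pq s_trunc_def by simp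
  then have "(if 0 < L then taylor_coeff a 0 q else 0) = (if (0::nat) = 0 then 1 else 0)"
    by (rule fun_cong)
  then have e1: "lp_eval q a = 1" using assms(2) by (simp add: tc_0)
  have ia: "inverse a = a" using assms(3) by (intro inverse_unique) (simp add: power2_eq_square)
  have "lp_eval (lp_inv q) a = lp_eval q a" using lp_eval_inv[OF o(1), of a] ia by simp
  then have "- lp_eval q a = lp_eval q a" using o(2) by (simp add: lp_eval_uminus)
  then show False using e1 by simp
qed

lemma gen1: "g*(1 - u*A) + I*(u*A) - g = A*(u*(I - g :: 'a::comm_ring_1))"
  by (simp add: algebra_simps)

lemma gen2: "g*(v*B) + I*(1 - v*B) - I = B*(v*(g - I :: 'a::comm_ring_1))"
  by (simp add: algebra_simps)

lemma gen3: "g*(v*B) = B*(g*v :: 'a::comm_ring_1)"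
  by (simp add: algebra_simps)

lemma gen4: "g*(1 - u*A) - H - g = -(A*(g*u)) - (H :: 'a::comm_ring_1)"
  by (simp add: algebra_simps)

lemma surj_part:
  assumes "a \<noteq> 0" "a\<^sup>2 \<noteq> 1"
  shows "s_trunc a L ` onsager = trunc_target L"
proof
  show "s_trunc a L ` onsager \<subseteq> trunc_target L"
    unfolding trunc_target_def s_trunc_def by auto
next
  show "trunc_target L \<subseteq> s_trunc a L ` onsager"
  proof
    fix c assume "c \<in> trunc_target L"
    then obtain c1 c2 c3 where c: "c = (c1, c2, c3)" "\<forall>j\<ge>L. c1 j = 0 \<and> c2 j = 0 \<and> c3 j = 0"
      unfolding trunc_target_def by auto
    let ?b = "inverse a"
    have ab: "a \<noteq> ?b"
    proof
      assume h: "a = ?b"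
      have "a * a = a * ?b" using h by (rule arg_cong[where f="\<lambda>x. a * x"])
      then have "a\<^sup>2 = 1" using assms(1) by (simp add: power2_eq_square)
      then show False using assms(2) by simp
    qed
    have b0: "?b \<noteq> 0" using assms(1) by simp
    obtain g1 where g1: "laurent_poly g1" "\<forall>j<L. taylor_coeff a j g1 = c1 j" using tc_exists[OF assms(1)] by blast
    obtain g2 where g2: "laurent_poly g2" "\<forall>j<L. taylor_coeff a j g2 = c2 j" using tc_exists[OF assms(1)] by blast
    obtain g3 where g3: "laurent_poly g3" "\<forall>j<L. taylor_coeff a j g3 = c3 j" using tc_exists[OF assms(1)] by blast
    obtain u v where uv: "laurent_poly u" "laurent_poly v" "u * lin a ^ L + v * lin ?b ^ L = 1"
      using lp_bezout[OF ab] by blast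
    define e1 where "e1 = v * lin ?b ^ L"
    define e2 where "e2 = u * lin a ^ L"
    have e12: "e1 = 1 - e2" using uv(3) unfolding e1_def e2_def by (simp only: eq_diff_eq add.commute)
    have e21: "e2 = 1 - e1" using e12 by simp
    have le: "laurent_poly e1" "laurent_poly e2" unfolding e1_def e2_def by (intro lp_mult lp_power lp_lin uv)+
    have ig2: "laurent_poly (lp_inv g2)" by (rule lp_inv_lp[OF g2(1)])
    define p where "p = g1 * e1 + lp_inv g2 * e2"
    have lp: "laurent_poly p" unfolding p_def by (intro lp_add lp_mult le g1(1) ig2)
    have "p - g1 = lin a ^ L * (u * (lp_inv g2 - g1))"
      unfolding p_def e12 unfolding e2_def by (rule gen1)
    then have pM: "p - g1 \<in> Mset a L" by (intro MsetI[of "u * (lp_inv g2 - g1)"] lp_mult lp_diff uv(1) ig2 g1(1))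
    have "p - lp_inv g2 = lin ?b ^ L * (v * (g1 - lp_inv g2))"
      unfolding p_def e21 unfolding e1_def by (rule gen2)
    then have "p - lp_inv g2 \<in> Mset ?b L" by (intro MsetI[of "v * (g1 - lp_inv g2)"] lp_mult lp_diff uv(2) ig2 g1(1))
    then have "lp_inv (p - lp_inv g2) \<in> Mset a L" using INV[OF assms(1) lp_diff[OF lp ig2]] by simp
    then have rM: "lp_inv p - g2 \<in> Mset a L" by (simp add: lp_inv_diff lp ig2 lp_inv_inv g2(1))
    define h where "h = g3 * e1"
    have lh: "laurent_poly h" unfolding h_def by (intro lp_mult g3(1) le)
    define q where "q = h - lp_inv h"
    have lq: "laurent_poly q" unfolding q_def by (intro lp_diff lh lp_inv_lp)
    have qanti: "lp_inv q = - q" unfolding q_def by (simp add: lp_inv_diff lh lp_inv_lp lp_inv_inv)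
    have "h \<in> Mset ?b L" unfolding h_def e1_def
      by (rule MsetI[of "g3 * v"]) (auto intro: lp_mult g3(1) uv(2) simp only: gen3)
    then have ihM: "lp_inv h \<in> Mset a L" using INV[OF assms(1) lh] by simp
    have "q - g3 = - (lin a ^ L * (g3 * u)) - lp_inv h"
      unfolding q_def h_def e12 e2_def by (rule gen4)
    moreover have "lin a ^ L * (g3 * u) \<in> Mset a L" by (intro MsetI[of "g3 * u"] lp_mult g3(1) uv(1)) simp
    ultimately have qM: "q - g3 \<in> Mset a L" using ihM by (simp add: Mset_diff Mset_uminus)
    have mem: "(p, lp_inv p, q) \<in> onsager" unfolding onsager_def using lp lq qanti by auto
    have "s_trunc a L (p, lp_inv p, q) = (c1, c2, c3)"
    proof -
      have "(\<lambda>j. if j < L then taylor_coeff a j p else 0) = c1"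
        using tc_eq[OF assms(1) lp g1(1) pM] g1(2) c(2) by (auto simp: fun_eq_iff)
      moreover have "(\<lambda>j. if j < L then taylor_coeff a j (lp_inv p) else 0) = c2"
        using tc_eq[OF assms(1) lp_inv_lp[OF lp] g2(1) rM] g2(2) c(2) by (auto simp: fun_eq_iff)
      moreover have "(\<lambda>j. if j < L then taylor_coeff a j q else 0) = c3"
        using tc_eq[OF assms(1) lq g3(1) qM] g3(2) c(2) by (auto simp: fun_eq_iff)
      ultimately show ?thesis unfolding s_trunc_def by simp
    qed
    then show "c \<in> s_trunc a L ` onsager" unfolding c(1) by (rule image_eqI[OF _ mem, OF sym])
  qed
qed

theorem proposition1:
  fixes a :: complex and L :: nat
  assumes "a \<noteq> 0" and "L > 0"
  shows "{x \<in> onsager. s_trunc a L x = ((\<lambda>_. 0), (\<lambda>_. 0), (\<lambda>_. 0))} = onsager_ideal (U_poly a ^ L)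
         \<and> (s_trunc a L ` onsager = trunc_target L \<longleftrightarrow> a \<noteq> 1 \<and> a \<noteq> -1)"
proof
  show "{x \<in> onsager. s_trunc a L x = ((\<lambda>_. 0), (\<lambda>_. 0), (\<lambda>_. 0))} = onsager_ideal (U_poly a ^ L)"
    by (rule kernel_part[OF assms(1)])
  have sq: "a\<^sup>2 = 1 \<longleftrightarrow> a = 1 \<or> a = -1" by (simp add: power2_eq_1_iff)
  show "s_trunc a L ` onsager = trunc_target L \<longleftrightarrow> a \<noteq> 1 \<and> a \<noteq> -1"
    using not_surj[OF assms] surj_part[OF assms(1)] sq by blast
qed

end
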